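(* Let $0<\theta<\pi$ and $\hat T>\theta$, and let $(\hat x,\hat T,\hat u)$ be the reference solution of problem (MD) described in the context. Then for every $\lambda\in\Lambda$: (i) $\alpha_0>0$; (ii) $H_u[\lambda](s)<0$ for all $s\in[0,\theta/\hat T)$.
   Context: Problem (MD) on $s\in[0,1]$, with state $(x_1,x_2,x_3,T)$ and scalar control $u$: minimize $T(0)$ subject to $\dot x_1=-T\sin x_3$, $\dot x_2=T\cos x_3$, $\dot x_3=Tu$, $\dot T=0$ a.e. on $[0,1]$; $x_1(0)=x_2(0)=x_3(0)=0$; $x_1(1)=b_1$, $x_2(1)=b_2$, $x_3(1)=\theta$; $-1\le u(s)\le1$ a.e. (It is the time-rescaled form of minimizing the final time $T$ for $\dot x_1=-\sin x_3$, $\dot x_2=\cos x_3$, $\dot x_3=u$.) Reference solution: $\hat T>\theta$ constant, $\hat u(s)=1$ on $[0,\theta/\hat T]$, $\hat u(s)=0$ on $(\theta/\hat T,1]$; $\hat x_3(s)=\hat Ts$ on $[0,\theta/\hat T]$ and $=\theta$ afterwards; $\hat x_1(s)=\cos(\hat Ts)-1$ on $[0,\theta/\hat T]$ and $=\hat T\sin\theta(\theta/\hat T-s)+\cos\theta-1$ afterwards; $\hat x_2(s)=\sin(\hat Ts)$ on $[0,\theta/\hat T]$ and $=\hat T\cos\theta(s-\theta/\hat T)+\sin\theta$ afterwards; $b_1:=\hat x_1(1)$, $b_2:=\hat x_2(1)$. Pre-Hamiltonian: $H[\lambda](x,T,u,s):=T\big(-\psi_1(s)\sin x_3+\psi_2(s)\cos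 x_3+\psi_3(s)u\big)$. A multiplier is $\lambda=(\alpha_0,\beta^0,\beta^1,\psi,\psi_T)$ with $\alpha_0\in\mathbb R$, $\beta^0,\beta^1\in\mathbb R^3$, $\psi=(\psi_1,\psi_2,\psi_3)$ and $\psi_T$ Lipschitz on $[0,1]$; terminal Lagrangian $\ell:=\alpha_0T(0)+\sum_{j=1}^3\beta^0_jx_j(0)+\sum_{j=1}^3\beta^1_jx_j(1)$. $\Lambda$ is the set of such $\lambda$ with: $\alpha_0\ge0$, $\alpha_0+|\beta^0|+|\beta^1|=1$; $-\dot\psi=H_x[\lambda]$ a.e. along the reference, $\psi(0)=-\beta^0$, $\psi(1)=\beta^1$; $-\dot\psi_T=H_T[\lambda]$ a.e. along the reference, $\psi_T(0)=-\alpha_0$, $\psi_T(1)=0$; and $H[\lambda](\hat x(s),\hat T,\hat u(s),s)=\min_{|v|\le1}H[\lambda](\hat x(s),\hat T,v,s)$ for a.e. $s$. $H_u[\lambda](s)$ denotes $\partial H/\partial u$ along the reference, i.e. $\hat T\psi_3(s)$. *)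

theory Defs
  imports "HOL-Analysis.Analysis"
begin

definition H :: "real^3 \<Rightarrow> real^3 \<Rightarrow> real \<Rightarrow> real \<Rightarrow> real" where
  "H p x T u = T * (- p$1 * sin (x$3) + p$2 * cos (x$3) + p$3 * u)"

definition Hx :: "real^3 \<Rightarrow> real^3 \<Rightarrow> real \<Rightarrow> real \<Rightarrow> real^3" where
  "Hx p x T u = (\<chi> j. deriv (\<lambda>y. H p (\<chi> i. if i = j then y else x$i) T u) (x$j))"

definition HT :: "real^3 \<Rightarrow> real^3 \<Rightarrow> real \<Rightarrow> real \<Rightarrow> real" where
  "HT p x T u = deriv (\<lambda>t. H p x t u) T"

definition Hu :: "real^3 \<Rightarrow> real^3 \<Rightarrow> real \<Rightarrow> real \<Rightarrow> real" where
  "Hu p x T u = deriv (\<lambda>v. H p x T v) u"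

definition uhat :: "real \<Rightarrow> real \<Rightarrow> real \<Rightarrow> real" where
  "uhat th Th s = (if s \<le> th / Th then 1 else 0)"

definition xhat :: "real \<Rightarrow> real \<Rightarrow> real \<Rightarrow> real^3" where
  "xhat th Th s =
     (if s \<le> th / Th then
        vector [cos (Th * s) - 1, sin (Th * s), Th * s]
      else
        vector [Th * sin th * (th / Th - s) + cos th - 1,
                Th * cos th * (s - th / Th) + sin th,
                th])"

definition Lambda ::
  "real \<Rightarrow> real \<Rightarrow> (real \<times> (real^3) \<times> (real^3) \<times> (real \<Rightarrow> real^3) \<times> (real \<Rightarrow> real)) set" where
  "Lambda th Th = {(a0, b0, b1, psi, psiT) | a0 b0 b1 psi psiT.
     a0 \<ge> 0 \<and> a0 + norm b0 + norm b1 = 1 \<and>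
     (\<exists>C. C-lipschitz_on {0..1} psi) \<and> (\<exists>C. C-lipschitz_on {0..1} psiT) \<and>
     (AE s in lebesgue. s \<in> {0..1} \<longrightarrow>
        (psi has_vector_derivative
           (- Hx (psi s) (xhat th Th s) Th (uhat th Th s))) (at s)) \<and>
     psi 0 = - b0 \<and> psi 1 = b1 \<and>
     (AE s in lebesgue. s \<in> {0..1} \<longrightarrow>
        (psiT has_real_derivative
           (- HT (psi s) (xhat th Th s) Th (uhat th Th s))) (at s)) \<and>
     psiT 0 = - a0 \<and> psiT 1 = 0 \<and>
     (AE s in lebesgue. s \<in> {0..1} \<longrightarrow>
        (\<forall>v. \<bar>v\<bar> \<le> 1 \<longrightarrow>
           H (psi s) (xhat th Th s) Th (uhat th Th s) \<le> H (psi s) (xhat th Th s) Th v))}"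

end

theory Submission
  imports Defs
begin
lemma zero_deriv_image_negligible:
  fixes h :: "real \<Rightarrow> real"
  assumes "\<And>z. z \<in> Z \<Longrightarrow> (h has_real_derivative 0) (at z)"
  shows "negligible (h ` Z)"
proof -
  have der: "((\<lambda>x::real^1. vec (h (x $ 1)) :: real^1) has_derivative (*\<^sub>R) 0) (at (vec z) within vec ` Z)"
    if "z \<in> Z" for z
  proof -
    have "(h has_derivative (\<lambda>x. x * 0)) (at z within Z)"
    proof -
      have "(h has_derivative (*) 0) (at z)" using assms[OF that] by (simp add: has_field_derivative_def)
      then have "(h has_derivative (*) 0) (at z within Z)" by (rule has_derivative_at_withinI)
      moreover have "(*) (0::real) = (\<lambda>x. x * 0)" by auto
      ultimately show ?thesis by simp
    qed
    from has_derivative_vector_1[of h "\<lambda>_. 0", OF this] show ?thesis by simp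
  qed
  have mz: "matrix ((*\<^sub>R) (0::real) :: real^1 \<Rightarrow> real^1) = 0"
    unfolding matrix_def by (simp add: vec_eq_iff)
  have "negligible ((\<lambda>x::real^1. vec (h (x $ 1)) :: real^1) ` (vec ` Z))"
  proof (rule baby_Sard[of "vec ` Z" "\<lambda>x::real^1. vec (h (x$1)) :: real^1" "\<lambda>_. (*\<^sub>R) 0"])
    fix x :: "real^1" assume "x \<in> vec ` Z"
    then obtain z where "z \<in> Z" "x = vec z" by auto
    then show "((\<lambda>x::real^1. vec (h (x$1)) :: real^1) has_derivative (*\<^sub>R) 0) (at x within vec ` Z)"
      using der by simp
  qed (auto simp: mz rank_0)
  moreover have "(\<lambda>x::real^1. vec (h (x $ 1)) :: real^1) ` (vec ` Z) = (vec ` (h ` Z))"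
    by (auto simp: image_image)
  ultimately have n1: "negligible (vec ` (h ` Z) :: (real^1) set)" by simp
  have "negligible ((\<lambda>x::real^1. x $ 1) ` (vec ` (h ` Z)))"
    by (rule negligible_differentiable_image_negligible[OF _ n1])
       (auto intro!: bounded_linear_imp_differentiable_on bounded_linear_vec_nth)
  moreover have "(\<lambda>x::real^1. x $ 1) ` (vec ` (h ` Z)) = h ` Z" by (auto simp: image_image)
  ultimately show ?thesis by simp
qed

lemma lip_const:
  fixes h :: "real \<Rightarrow> real"
  assumes ab: "a \<le> b" and lip: "C-lipschitz_on {a..b} h" and N: "negligible N"
    and der: "\<And>s. s \<in> {a<..<b} \<Longrightarrow> s \<notin> N \<Longrightarrow> (h has_real_derivative 0) (at s)"
  shows "h b = h a"
proof -
  have n1: "negligible (h ` (N \<inter> {a..b}))"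
  proof (rule negligible_locally_Lipschitz_image)
    show "negligible (N \<inter> {a..b})" using N negligible_Int by blast
    fix x assume x: "x \<in> N \<inter> {a..b}"
    show "\<exists>T B. open T \<and> x \<in> T \<and> (\<forall>y\<in>(N \<inter> {a..b}) \<inter> T. norm (h y - h x) \<le> B * norm (y - x))"
      apply (rule exI[of _ UNIV], rule exI[of _ C])
      using x lipschitz_onD[OF lip] by (auto simp: dist_norm)
  qed auto
  have n2: "negligible (h ` ({a<..<b} - N))"
    by (rule zero_deriv_image_negligible) (auto intro: der)
  have sub: "h ` {a..b} \<subseteq> h ` (N \<inter> {a..b}) \<union> h ` ({a<..<b} - N) \<union> {h a, h b}"
  proof
    fix y assume "y \<in> h ` {a..b}"
    then obtain x where x: "x \<in> {a..b}" "y = h x" by auto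
    show "y \<in> h ` (N \<inter> {a..b}) \<union> h ` ({a<..<b} - N) \<union> {h a, h b}"
    proof (cases "x = a \<or> x = b")
      case True then show ?thesis using x by auto
    next
      case False then show ?thesis using x by (cases "x \<in> N") auto
    qed
  qed
  have "negligible (h ` {a..b})"
    by (rule negligible_subset[OF _ sub]) (use n1 n2 in auto)
  moreover obtain c d where cd: "h ` {a..b} = {c..d}" "c \<le> d"
    using continuous_image_closed_interval[OF ab lipschitz_on_continuous_on[OF lip]] by blast
  ultimately have "negligible (cbox c d)" by simp
  then have "box c d = {}" by (simp only: negligible_interval)
  then have "c = d" using cd(2) by (auto simp: box_real)
  moreover have "h a \<in> {c..d}" "h b \<in> {c..d}" using cd(1) ab by auto
  ultimately show ?thesis by auto
qed


lemma lip_ftc: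
  fixes f G g :: "real \<Rightarrow> real"
  assumes ab: "a \<le> b" and lip: "C-lipschitz_on {a..b} f" and N: "negligible N"
    and der: "\<And>s. s \<in> {a<..<b} \<Longrightarrow> s \<notin> N \<Longrightarrow> (f has_real_derivative g s) (at s)"
    and derG: "\<And>s. (G has_real_derivative g s) (at s)"
    and bd: "\<And>s. s \<in> {a..b} \<Longrightarrow> \<bar>g s\<bar> \<le> D"
  shows "f b = f a + (G b - G a)"
proof -
  have D: "0 \<le> D" using bd[of a] ab by auto
  have "D-lipschitz_on {a..b} G"
  proof (rule bounded_derivative_imp_lipschitz[where f' = "\<lambda>s. (*) (g s)"])
    fix x assume "x \<in> {a..b}"
    show "(G has_derivative (*) (g x)) (at x within {a..b})"
      using derG[of x] by (simp add: has_field_derivative_def has_derivative_at_withinI)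
    show "onorm ((*) (g x)) \<le> D"
      by (rule onorm_le) (use bd[OF \<open>x \<in> {a..b}\<close>] in \<open>auto simp: abs_mult intro: mult_right_mono\<close>)
  qed (auto simp: D)
  then have l2: "(C + D)-lipschitz_on {a..b} (\<lambda>s. f s - G s)"
    by (rule lipschitz_on_diff[OF lip])
  have "(\<lambda>s. f s - G s) b = (\<lambda>s. f s - G s) a"
  proof (rule lip_const[OF ab l2 N])
    fix s assume "s \<in> {a<..<b}" "s \<notin> N"
    then show "((\<lambda>s. f s - G s) has_real_derivative 0) (at s)"
      using DERIV_diff[OF der derG] by fastforce
  qed
  then show ?thesis by simp
qed

lemma lip_nth:
  fixes psi :: "real \<Rightarrow> real^3"
  assumes "C-lipschitz_on S psi"
  shows "C-lipschitz_on S (\<lambda>s. psi s $ i)"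
proof (rule lipschitz_onI)
  show "0 \<le> C" using assms lipschitz_on_nonneg by blast
  fix x y assume "x \<in> S" "y \<in> S"
  have "dist (psi x $ i) (psi y $ i) \<le> dist (psi x) (psi y)"
    by (simp add: dist_vec_nth_le)
  also have "\<dots> \<le> C * dist x y" using lipschitz_onD[OF assms \<open>x \<in> S\<close> \<open>y \<in> S\<close>] .
  finally show "dist (psi x $ i) (psi y $ i) \<le> C * dist x y" .
qed

lemma der_nth:
  fixes psi :: "real \<Rightarrow> real^3"
  assumes "(psi has_vector_derivative D) (at s)"
  shows "((\<lambda>s. psi s $ i) has_real_derivative D $ i) (at s)"
  using bounded_linear.has_vector_derivative[OF bounded_linear_vec_nth assms, of i]
  by (simp add: has_real_derivative_iff_has_vector_derivative)

lemma Hx_eq: "Hx p x T u = vector [0, 0, T * (- p$1 * cos (x$3) - p$2 * sin (x$3))]"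
  unfolding Hx_def
  apply (simp add: vec_eq_iff forall_3 H_def)
  apply (intro conjI DERIV_imp_deriv)
    apply (auto intro!: derivative_eq_intros)
  done
lemma HT_eq: "HT p x T u = - p$1 * sin (x$3) + p$2 * cos (x$3) + p$3 * u"
  unfolding HT_def H_def
  by (intro DERIV_imp_deriv) (auto intro!: derivative_eq_intros)
lemma Hu_eq: "Hu p x T u = T * p$3"
  unfolding Hu_def H_def
  by (intro DERIV_imp_deriv) (auto intro!: derivative_eq_intros)
lemma xhat3: "xhat th Th s $ 3 = (if s \<le> th / Th then Th * s else th)"
  by (simp add: xhat_def)

lemma exists_not_in:
  fixes c d :: real
  assumes "c < d" "negligible N"
  shows "\<exists>x. c < x \<and> x < d \<and> x \<notin> N"
proof (rule ccontr)
  assume "\<not> ?thesis"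
  then have "{c<..<d} \<subseteq> N" by auto
  then have "negligible (box c d)" using assms(2) negligible_subset by (auto simp: box_real)
  then have "box c d = {}" by (simp only: negligible_interval)
  then show False using assms(1) by (auto simp: box_real)
qed

lemma neg_vector3: "- (vector [a, b, c] :: real^3) = vector [-a, -b, -c]"
  by (simp add: vec_eq_iff forall_3)

theorem mainTheorem15:
  fixes th Th :: real
  assumes "0 < th" and "th < pi" and "th < Th"
    and "(a0, b0, b1, psi, psiT) \<in> Lambda th Th"
  shows "a0 > 0 \<and>
    (\<forall>s \<in> {0..<th / Th}. Hu (psi s) (xhat th Th s) Th (uhat th Th s) < 0)"
proof -
  have Thpos: "Th > 0" using assms by linarith
  define tau where "tau = th / Th"
  have tau0: "0 < tau" and tau1: "tau < 1" using assms Thpos by (auto simp: tau_def field_simps)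
  have Thtau: "Th * tau = th" using Thpos by (simp add: tau_def)
  from assms(4) have a0nn: "a0 \<ge> 0" and nrm: "a0 + norm b0 + norm b1 = 1"
    and lp: "\<exists>C. C-lipschitz_on {0..1} psi" and lT: "\<exists>C. C-lipschitz_on {0..1} psiT"
    and AE1: "AE s in lebesgue. s \<in> {0..1} \<longrightarrow>
        (psi has_vector_derivative
           (- Hx (psi s) (xhat th Th s) Th (uhat th Th s))) (at s)"
    and p0: "psi 0 = - b0" and p1: "psi 1 = b1"
    and AE2: "AE s in lebesgue. s \<in> {0..1} \<longrightarrow>
        (psiT has_real_derivative
           (- HT (psi s) (xhat th Th s) Th (uhat th Th s))) (at s)"
    and pT0: "psiT 0 = - a0" and pT1: "psiT 1 = 0"
    and AE3: "AE s in lebesgue. s \<in> {0..1} \<longrightarrow>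
        (\<forall>v. \<bar>v\<bar> \<le> 1 \<longrightarrow>
           H (psi s) (xhat th Th s) Th (uhat th Th s) \<le> H (psi s) (xhat th Th s) Th v)"
    unfolding Lambda_def by auto
  obtain Cp where Cp: "Cp-lipschitz_on {0..1} psi" using lp by blast
  obtain CT where CT: "CT-lipschitz_on {0..1} psiT" using lT by blast
  obtain N1 where N1: "negligible N1" "\<And>s. s \<in> {0..1} \<Longrightarrow> s \<notin> N1 \<Longrightarrow>
        (psi has_vector_derivative (- Hx (psi s) (xhat th Th s) Th (uhat th Th s))) (at s)"
    using AE1 unfolding eventually_ae_filter_negligible by blast
  obtain N2 where N2: "negligible N2" "\<And>s. s \<in> {0..1} \<Longrightarrow> s \<notin> N2 \<Longrightarrow>
        (psiT has_real_derivative (- HT (psi s) (xhat th Th s) Th (uhat th Th s))) (at s)"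
    using AE2 unfolding eventually_ae_filter_negligible by blast
  obtain N3 where N3: "negligible N3" "\<And>s v. s \<in> {0..1} \<Longrightarrow> s \<notin> N3 \<Longrightarrow> \<bar>v\<bar> \<le> 1 \<Longrightarrow>
        H (psi s) (xhat th Th s) Th (uhat th Th s) \<le> H (psi s) (xhat th Th s) Th v"
    using AE3 unfolding eventually_ae_filter_negligible by blast
  define N where "N = N1 \<union> N2 \<union> N3"
  have N: "negligible N" using N1 N2 N3 by (simp add: N_def)
  define x3 where "x3 s = (if s \<le> tau then Th * s else th)" for s
  have x3: "xhat th Th s $ 3 = x3 s" for s by (simp add: xhat3 x3_def tau_def)
  have uh: "uhat th Th s = (if s \<le> tau then 1 else 0)" for s by (simp add: uhat_def tau_def)
  have dp: "((\<lambda>s. psi s $ i) has_real_derivative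
      (vector [0, 0, - (Th * (- psi s$1 * cos (x3 s) - psi s$2 * sin (x3 s)))] :: real^3) $ i) (at s)"
    if "s \<in> {0..1}" "s \<notin> N" for s i
  proof -
    have "(psi has_vector_derivative
      (vector [0, 0, - (Th * (- psi s$1 * cos (x3 s) - psi s$2 * sin (x3 s)))] :: real^3)) (at s)"
      using N1(2)[of s] that unfolding N_def Hx_eq x3
      by (simp add: neg_vector3)
    then show ?thesis by (rule der_nth)
  qed
  have dT: "(psiT has_real_derivative
      - (- psi s$1 * sin (x3 s) + psi s$2 * cos (x3 s) + psi s$3 * (if s \<le> tau then 1 else 0))) (at s)"
    if "s \<in> {0..1}" "s \<notin> N" for s
    using N2(2)[of s] that unfolding N_def HT_eq x3 uh by simp
  have mn: "H (psi s) (xhat th Th s) Th (uhat th Th s) \<le> H (psi s) (xhat th Th s) Th v"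
    if "s \<in> {0..1}" "s \<notin> N" "\<bar>v\<bar> \<le> 1" for s v
    using N3(2)[of s v] that unfolding N_def by simp
  define c1 where "c1 = psi 0 $ 1"
  define c2 where "c2 = psi 0 $ 2"
  have cst: "psi s $ i = psi 0 $ i" if "s \<in> {0..1}" "i = 1 \<or> i = 2" for s i
  proof (rule lip_const[of 0 s Cp "\<lambda>s. psi s $ i" N, OF _ _ N])
    show "0 \<le> s" using that by auto
    show "Cp-lipschitz_on {0..s} (\<lambda>s. psi s $ i)"
      by (rule lip_nth, rule lipschitz_on_subset[OF Cp]) (use that in auto)
    fix r assume "r \<in> {0<..<s}" "r \<notin> N"
    then show "((\<lambda>s. psi s $ i) has_real_derivative 0) (at r)"
      using dp[of r i] that by auto
  qed
  have ps1: "psi s $ 1 = c1" and ps2: "psi s $ 2 = c2" if "s \<in> {0..1}" for s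
    using cst[of s] that by (auto simp: c1_def c2_def)
  define K where "K = psi 0 $ 3 + c2"
  have p3a: "psi s $ 3 = c1 * sin (Th * s) - c2 * cos (Th * s) + K" if s: "s \<in> {0..tau}" for s
  proof -
    have "psi s $ 3 = psi 0 $ 3 + ((c1 * sin (Th * s) - c2 * cos (Th * s)) - (c1 * sin (Th * 0) - c2 * cos (Th * 0)))"
    proof (rule lip_ftc[of 0 s Cp "\<lambda>s. psi s $ 3" N "\<lambda>r. Th * (c1 * cos (Th * r) + c2 * sin (Th * r))"
          "\<lambda>s. c1 * sin (Th * s) - c2 * cos (Th * s)" "Th * (\<bar>c1\<bar> + \<bar>c2\<bar>)", OF _ _ N])
      show "0 \<le> s" using s by auto
      show "Cp-lipschitz_on {0..s} (\<lambda>s. psi s $ 3)"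
        by (rule lip_nth, rule lipschitz_on_subset[OF Cp]) (use s tau1 in auto)
    next
      fix r assume r: "r \<in> {0<..<s}" "r \<notin> N"
      then have r01: "r \<in> {0..1}" and rt: "r \<le> tau" using s tau1 by auto
      have e: "(vector [0, 0, - (Th * (- psi r$1 * cos (x3 r) - psi r$2 * sin (x3 r)))] :: real^3) $ 3
          = Th * (c1 * cos (Th * r) + c2 * sin (Th * r))"
        using rt r01 by (simp add: ps1 ps2 x3_def algebra_simps)
      show "((\<lambda>s. psi s $ 3) has_real_derivative Th * (c1 * cos (Th * r) + c2 * sin (Th * r))) (at r)"
        using dp[OF r01 r(2), of 3] unfolding e .
    next
      fix r show "((\<lambda>s. c1 * sin (Th * s) - c2 * cos (Th * s)) has_real_derivative
          Th * (c1 * cos (Th * r) + c2 * sin (Th * r))) (at r)"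
        by (auto intro!: derivative_eq_intros simp: algebra_simps)
    next
      fix r :: real
      have "\<bar>c1 * cos (Th * r) + c2 * sin (Th * r)\<bar> \<le> \<bar>c1\<bar> + \<bar>c2\<bar>"
      proof -
        have "\<bar>c1 * cos (Th * r)\<bar> \<le> \<bar>c1\<bar>" by (simp add: abs_mult mult_left_le)
        moreover have "\<bar>c2 * sin (Th * r)\<bar> \<le> \<bar>c2\<bar>" by (simp add: abs_mult mult_left_le)
        ultimately show ?thesis by linarith
      qed
      then show "\<bar>Th * (c1 * cos (Th * r) + c2 * sin (Th * r))\<bar> \<le> Th * (\<bar>c1\<bar> + \<bar>c2\<bar>)"
        using Thpos by (simp add: abs_mult)
    qed
    then show ?thesis by (simp add: K_def)
  qed
  define L where "L = Th * (c1 * cos th + c2 * sin th)"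
  have p3b: "psi s $ 3 = psi tau $ 3 + (L * s - L * tau)" if s: "s \<in> {tau..1}" for s
  proof (rule lip_ftc[of tau s Cp "\<lambda>s. psi s $ 3" N "\<lambda>r. L" "\<lambda>r. L * r" "\<bar>L\<bar>", OF _ _ N])
    show "tau \<le> s" using s by auto
    show "Cp-lipschitz_on {tau..s} (\<lambda>s. psi s $ 3)"
      by (rule lip_nth, rule lipschitz_on_subset[OF Cp]) (use s tau0 in auto)
  next
    fix r assume r: "r \<in> {tau<..<s}" "r \<notin> N"
    then have r01: "r \<in> {0..1}" and rt: "\<not> r \<le> tau" using s tau0 by auto
    have e: "(vector [0, 0, - (Th * (- psi r$1 * cos (x3 r) - psi r$2 * sin (x3 r)))] :: real^3) $ 3 = L"
      using rt r01 by (simp add: ps1 ps2 x3_def L_def algebra_simps)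
    show "((\<lambda>s. psi s $ 3) has_real_derivative L) (at r)"
      using dp[OF r01 r(2), of 3] unfolding e .
  next
    fix r show "((\<lambda>r. L * r) has_real_derivative L) (at r)"
      by (auto intro!: derivative_eq_intros)
  qed auto
  have z: "psi r $ 3 = 0" if "r \<in> {0..1}" "r \<notin> N" "tau < r" for r
  proof -
    have u0: "uhat th Th r = 0" using that by (simp add: uh)
    have A: "Th * (psi r $ 3 * 0) \<le> Th * (psi r $ 3 * v)" if "\<bar>v\<bar> \<le> 1" for v
      using mn[of r v] \<open>r \<in> {0..1}\<close> \<open>r \<notin> N\<close> that unfolding H_def u0
      by (simp add: algebra_simps)
    have "0 \<le> psi r $ 3" using A[of 1] Thpos by (simp add: zero_le_mult_iff)
    moreover have "0 \<le> - psi r $ 3" using A[of "-1"] Thpos by (simp add: mult_le_0_iff)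
    ultimately show ?thesis by linarith
  qed
  obtain s1 where s1: "tau < s1" "s1 < (tau + 1) / 2" "s1 \<notin> N"
    using exists_not_in[OF _ N, of tau "(tau+1)/2"] tau1 by auto
  obtain s2 where s2: "(tau + 1) / 2 < s2" "s2 < 1" "s2 \<notin> N"
    using exists_not_in[OF _ N, of "(tau+1)/2" 1] tau1 by auto
  have e1: "psi tau $ 3 + (L * s1 - L * tau) = 0"
    using p3b[of s1] z[of s1] s1 tau0 tau1 by auto
  have e2: "psi tau $ 3 + (L * s2 - L * tau) = 0"
    using p3b[of s2] z[of s2] s2 tau0 tau1 by auto
  have "L * (s2 - s1) = 0" using e1 e2 by (simp only: right_diff_distrib)
  then have L0: "L = 0" using s1 s2 by auto
  then have Pt: "psi tau $ 3 = 0" using e1 by simp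
  have E2: "c1 * cos th + c2 * sin th = 0" using L0 Thpos by (simp add: L_def)
  have E1: "c1 * sin th - c2 * cos th + K = 0"
    using p3a[of tau] Pt tau0 Thtau by simp
  have z2: "psi s $ 3 = 0" if "s \<in> {tau..1}" for s
    using p3b[OF that] Pt L0 by simp
  have T1: "psiT tau = psiT 0 + ((- K) * tau - (- K) * 0)"
  proof (rule lip_ftc[of 0 tau CT psiT N "\<lambda>r. - K" "\<lambda>r. (- K) * r" "\<bar>K\<bar>", OF _ _ N])
    show "CT-lipschitz_on {0..tau} psiT"
      by (rule lipschitz_on_subset[OF CT]) (use tau1 in auto)
  next
    fix r assume r: "r \<in> {0<..<tau}" "r \<notin> N"
    then have r01: "r \<in> {0..1}" and rt: "r \<le> tau" "r \<in> {0..tau}" using tau1 by auto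
    have e: "- (- psi r$1 * sin (x3 r) + psi r$2 * cos (x3 r) + psi r$3 * (if r \<le> tau then 1 else 0)) = - K"
      using rt r01 by (simp add: ps1 ps2 p3a x3_def)
    show "(psiT has_real_derivative - K) (at r)"
      using dT[OF r01 r(2)] unfolding e .
  next
    fix r show "((\<lambda>r. (- K) * r) has_real_derivative - K) (at r)"
      by (auto intro!: derivative_eq_intros)
  qed (use tau0 in auto)
  define M where "M = - (- c1 * sin th + c2 * cos th)"
  have T2: "psiT 1 = psiT tau + (M * 1 - M * tau)"
  proof (rule lip_ftc[of tau 1 CT psiT N "\<lambda>r. M" "\<lambda>r. M * r" "\<bar>M\<bar>", OF _ _ N])
    show "CT-lipschitz_on {tau..1} psiT"
      by (rule lipschitz_on_subset[OF CT]) (use tau0 in auto)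
  next
    fix r assume r: "r \<in> {tau<..<1}" "r \<notin> N"
    then have r01: "r \<in> {0..1}" and rt: "\<not> r \<le> tau" "r \<in> {tau..1}" using tau0 by auto
    have e: "- (- psi r$1 * sin (x3 r) + psi r$2 * cos (x3 r) + psi r$3 * (if r \<le> tau then 1 else 0)) = M"
      using rt r01 by (simp add: ps1 ps2 z2 x3_def M_def)
    show "(psiT has_real_derivative M) (at r)"
      using dT[OF r01 r(2)] unfolding e .
  next
    fix r show "((\<lambda>r. M * r) has_real_derivative M) (at r)"
      by (auto intro!: derivative_eq_intros)
  qed (use tau1 in auto)
  have KM: "M = - K" using E1 by (simp add: M_def)
  have Ka: "K = - a0"
  proof -
    have "0 = - a0 - K * tau - K * (1 - tau)" using T1 T2 pT0 pT1 KM by (simp add: algebra_simps)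
    then show ?thesis by (simp add: algebra_simps)
  qed
  have E1': "c1 * sin th - c2 * cos th = a0" using E1 Ka by simp
  have sc: "(sin th)^2 + (cos th)^2 = 1" by simp
  have C1: "c1 = a0 * sin th"
  proof -
    have "c1 = c1 * ((sin th)^2 + (cos th)^2)" by (simp only: sc mult_1_right)
    also have "\<dots> = sin th * (c1 * sin th - c2 * cos th) + cos th * (c1 * cos th + c2 * sin th)"
      by (simp only: power2_eq_square) algebra
    also have "\<dots> = a0 * sin th" unfolding E1' E2 by simp
    finally show ?thesis .
  qed
  have C2: "c2 = - a0 * cos th"
  proof -
    have "c2 = c2 * ((sin th)^2 + (cos th)^2)" by (simp only: sc mult_1_right)
    also have "\<dots> = - cos th * (c1 * sin th - c2 * cos th) + sin th * (c1 * cos th + c2 * sin th)"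
      by (simp only: power2_eq_square) algebra
    also have "\<dots> = - a0 * cos th" unfolding E1' E2 by simp
    finally show ?thesis .
  qed
  have apos: "a0 > 0"
  proof (rule ccontr)
    assume "\<not> a0 > 0"
    then have a00: "a0 = 0" using a0nn by simp
    then have c10: "c1 = 0" and c20: "c2 = 0" and K0: "K = 0" using C1 C2 Ka by auto
    have "psi 0 $ 3 = 0" using K0 c20 by (simp add: K_def)
    then have "psi 0 = 0" using c10 c20 by (simp add: vec_eq_iff forall_3 c1_def c2_def)
    then have b00: "b0 = 0" using p0 by simp
    have "psi 1 = 0" using ps1[of 1] ps2[of 1] z2[of 1] c10 c20 tau1
      by (simp add: vec_eq_iff forall_3)
    then have "b1 = 0" using p1 by simp
    then show False using nrm a00 b00 by simp
  qed
  have Hneg: "Hu (psi s) (xhat th Th s) Th (uhat th Th s) < 0" if s: "s \<in> {0..<th / Th}" for s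
  proof -
    have st: "s \<in> {0..tau}" "s < tau" using s by (auto simp: tau_def)
    have "psi s $ 3 = a0 * (cos (th - Th * s) - 1)"
      using p3a[OF st(1)] C1 C2 Ka by (simp add: cos_diff algebra_simps)
    moreover have "cos (th - Th * s) < cos 0"
    proof (rule cos_monotone_0_pi)
      have "Th * s < Th * tau" using st Thpos by simp
      then show "0 < th - Th * s" using Thtau by simp
      show "th - Th * s \<le> pi" proof -
        have "0 \<le> Th * s" using st Thpos by simp
        then show ?thesis using assms(2) by linarith
      qed
    qed auto
    ultimately have "psi s $ 3 < 0" using apos by (simp add: mult_pos_neg)
    then show ?thesis using Thpos by (simp add: Hu_eq mult_pos_neg)
  qed
  show ?thesis using apos Hneg by blast
qed
end
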